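(* Let $\lambda\in\mathbb R$, let $\phi:Z\to[-\infty,+\infty]$ be proper and closed, and suppose Assumptions (A1) and (A3)(i) hold. Let $w$ be the solution of $\mathrm{EVIs}_\lambda(X,Y,\phi)$ with $\lim_{t\downarrow0}w_t=w_0\in\overline{D\phi}$. If $\phi$ admits a saddle point $w^*=(x^*,y^* )$, then $\mathsf d_Z^2(w_t,w^* )\le e^{-2\lambda t}\mathsf d_Z^2(w_0,w^* )$ for every $t>0$.
   Context: $(X,\mathsf d_X)$, $(Y,\mathsf d_Y)$ complete metric spaces; $Z=X\times Y$ with $\mathsf d_Z=(\mathsf d_X^2+\mathsf d_Y^2)^{1/2}$. $D_X\phi=\{x:\phi(x,y)<+\infty\ \forall y\}$, $D_Y\phi=\{y:\phi(x,y)>-\infty\ \forall x\}$, $D\phi=D_X\phi\times D_Y\phi$; proper: $D\phi\ne\emptyset$. Closed: for $x\in D_X\phi$, $y\mapsto\phi(x,y)$ upper semicontinuous; for $y\in D_Y\phi$, $x\mapsto\phi(x,y)$ lower semicontinuous. (A1): $\phi=+\infty$ on $(X\setminus D_X\phi)\times D_Y\phi$, $\phi=-\infty$ on $D_X\phi\times(Y\setminus D_Y\phi)$. (A3)(i): there exist continuous $\varphi:Z\to\mathbb R$, lower semicontinuous $\psi_X:X\to(-\infty,+\infty]$, upper semicontinuous $\psi_Y:Y\to[-\infty,+\infty)$ with $\phi=\varphi+\psi_X+\psi_Y$ on $D\phi$. A saddle point is $(x^*,y^* )\in Z$ with $\phi(x^*,y)\le\phi(x^*,y^* )\le\phi(x,y^*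 )$ for all $(x,y)\in Z$. A solution of $\mathrm{EVIs}_\lambda(X,Y,\phi)$ is a pair of continuous curves $(u,v):(0,+\infty)\to D\phi$ with, for all $t>0$, $(x,y)\in D\phi$: $\frac12\frac{d^+}{dt}\mathsf d_X^2(u_t,x)+\frac\lambda2\mathsf d_X^2(u_t,x)+\phi(u_t,v_t)\le\phi(x,v_t)$ and $\frac12\frac{d^+}{dt}\mathsf d_Y^2(v_t,y)+\frac\lambda2\mathsf d_Y^2(v_t,y)+\phi(u_t,y)\le\phi(u_t,v_t)$, with $\frac{d^+}{dt}f(t)=\limsup_{h\downarrow0}(f(t+h)-f(t))/h$. *)

theory Defs
  imports "HOL-Analysis.Analysis"
begin

definition lsc :: "('a::topological_space \<Rightarrow> ereal) \<Rightarrow> bool" where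
  "lsc f \<longleftrightarrow> (\<forall>x. f x \<le> Liminf (at x) f)"

definition usc :: "('a::topological_space \<Rightarrow> ereal) \<Rightarrow> bool" where
  "usc f \<longleftrightarrow> (\<forall>x. Limsup (at x) f \<le> f x)"

definition DX :: "('a \<Rightarrow> 'b \<Rightarrow> ereal) \<Rightarrow> 'a set" where
  "DX \<phi> = {x. \<forall>y. \<phi> x y < \<infinity>}"

definition DY :: "('a \<Rightarrow> 'b \<Rightarrow> ereal) \<Rightarrow> 'b set" where
  "DY \<phi> = {y. \<forall>x. \<phi> x y > -\<infinity>}"

definition Dphi :: "('a \<Rightarrow> 'b \<Rightarrow> ereal) \<Rightarrow> ('a \<times> 'b) set" where
  "Dphi \<phi> = DX \<phi> \<times> DY \<phi>"

definition proper_saddle :: "('a \<Rightarrow> 'b \<Rightarrow> ereal) \<Rightarrow> bool" where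
  "proper_saddle \<phi> \<longleftrightarrow> Dphi \<phi> \<noteq> {}"

definition closed_saddle ::
  "('a::topological_space \<Rightarrow> 'b::topological_space \<Rightarrow> ereal) \<Rightarrow> bool" where
  "closed_saddle \<phi> \<longleftrightarrow>
     (\<forall>x\<in>DX \<phi>. usc (\<lambda>y. \<phi> x y)) \<and> (\<forall>y\<in>DY \<phi>. lsc (\<lambda>x. \<phi> x y))"

definition assumption_A1 :: "('a \<Rightarrow> 'b \<Rightarrow> ereal) \<Rightarrow> bool" where
  "assumption_A1 \<phi> \<longleftrightarrow>
     (\<forall>x\<in>-DX \<phi>. \<forall>y\<in>DY \<phi>. \<phi> x y = \<infinity>) \<and>
     (\<forall>x\<in>DX \<phi>. \<forall>y\<in>-DY \<phi>. \<phi> x y = -\<infinity>)"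

definition assumption_A3i ::
  "('a::topological_space \<Rightarrow> 'b::topological_space \<Rightarrow> ereal) \<Rightarrow> bool" where
  "assumption_A3i \<phi> \<longleftrightarrow>
     (\<exists>(\<phi>0::'a \<times> 'b \<Rightarrow> real) (\<psi>X::'a \<Rightarrow> ereal) (\<psi>Y::'b \<Rightarrow> ereal).
        continuous_on UNIV \<phi>0 \<and>
        (\<forall>x. \<psi>X x \<noteq> -\<infinity>) \<and> lsc \<psi>X \<and>
        (\<forall>y. \<psi>Y y \<noteq> \<infinity>) \<and> usc \<psi>Y \<and>
        (\<forall>(x,y)\<in>Dphi \<phi>. \<phi> x y = ereal (\<phi>0 (x,y)) + \<psi>X x + \<psi>Y y))"

definition saddle_point :: "('a \<Rightarrow> 'b \<Rightarrow> ereal) \<Rightarrow> 'a \<Rightarrow> 'b \<Rightarrow> bool" where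
  "saddle_point \<phi> xs ys \<longleftrightarrow> (\<forall>x y. \<phi> xs y \<le> \<phi> xs ys \<and> \<phi> xs ys \<le> \<phi> x ys)"

definition upper_dini :: "(real \<Rightarrow> real) \<Rightarrow> real \<Rightarrow> ereal" where
  "upper_dini f t = Limsup (at_right 0) (\<lambda>h. ereal ((f (t + h) - f t) / h))"

definition EVIs_solution ::
  "real \<Rightarrow> ('a::metric_space \<Rightarrow> 'b::metric_space \<Rightarrow> ereal) \<Rightarrow>
   (real \<Rightarrow> 'a) \<Rightarrow> (real \<Rightarrow> 'b) \<Rightarrow> bool" where
  "EVIs_solution lam \<phi> u v \<longleftrightarrow>
     continuous_on {0<..} u \<and> continuous_on {0<..} v \<and>
     (\<forall>t>0. (u t, v t) \<in> Dphi \<phi>) \<and>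
     (\<forall>t>0. \<forall>(x,y)\<in>Dphi \<phi>.
        ereal (1/2) * upper_dini (\<lambda>s. (dist (u s) x)\<^sup>2) t
          + ereal (lam/2 * (dist (u t) x)\<^sup>2) + \<phi> (u t) (v t) \<le> \<phi> x (v t) \<and>
        ereal (1/2) * upper_dini (\<lambda>s. (dist (v s) y)\<^sup>2) t
          + ereal (lam/2 * (dist (v t) y)\<^sup>2) + \<phi> (u t) y \<le> \<phi> (u t) (v t))"

end

theory Submission
  imports Defs
begin

definition dini_le :: "(real \<Rightarrow> real) \<Rightarrow> real \<Rightarrow> real \<Rightarrow> bool" where
  "dini_le f r L \<longleftrightarrow> (\<forall>e>0. \<forall>\<^sub>F h in at_right 0. (f (r + h) - f r) / h < L + e)"

lemma dini_le_mono: "dini_le f r L \<Longrightarrow> L \<le> L' \<Longrightarrow> dini_le f r L'"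
  unfolding dini_le_def by (smt (verit) eventually_mono)

lemma dini_le_add:
  assumes "dini_le f r L1" "dini_le g r L2"
  shows "dini_le (\<lambda>s. f s + g s) r (L1 + L2)"
  unfolding dini_le_def
proof (intro allI impI)
  fix e :: real assume e: "e > 0"
  have "\<forall>\<^sub>F h in at_right 0. (f (r + h) - f r) / h < L1 + e/2"
       "\<forall>\<^sub>F h in at_right 0. (g (r + h) - g r) / h < L2 + e/2"
    using assms e unfolding dini_le_def by auto
  then show "\<forall>\<^sub>F h in at_right 0. (f (r + h) + g (r + h) - (f r + g r)) / h < L1 + L2 + e"
    by eventually_elim (simp add: diff_divide_distrib add_divide_distrib)
qed

lemma dini_le_0_mono:
  fixes G :: "real \<Rightarrow> real"
  assumes st: "s \<le> t" and cont: "continuous_on {s..t} G"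
    and d: "\<And>r. s \<le> r \<Longrightarrow> r < t \<Longrightarrow> dini_le G r 0"
  shows "G t \<le> G s"
proof (rule field_le_epsilon)
  fix e0 :: real assume e0: "e0 > 0"
  define e where "e = e0 / (t - s + 1)"
  have e: "e > 0" using e0 st by (simp add: e_def)
  define H where "H r = G r - G s - e * (r - s)" for r
  have contH: "continuous_on {s..t} H" unfolding H_def
    by (intro continuous_intros cont)
  define S where "S = {r \<in> {s..t}. \<forall>q\<in>{s..r}. H q \<le> 0}"
  have sS: "s \<in> S" using st by (auto simp: S_def H_def)
  have bdd: "bdd_above S" unfolding S_def by (auto intro: bdd_aboveI[of _ t])
  define m where "m = Sup S"
  have sm: "s \<le> m" using sS bdd by (simp add: m_def cSup_upper)
  have mt: "m \<le> t" unfolding m_def using sS by (intro cSup_least) (auto simp: S_def)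
  have below: "H q \<le> 0" if qs: "s \<le> q" and qm: "q < m" for q
  proof -
    obtain r where "r \<in> S" "q < r" using less_cSupD[of S q] sS qm unfolding m_def by blast
    then show ?thesis using qs by (auto simp: S_def)
  qed
  have Hm: "H m \<le> 0"
  proof (cases "s < m")
    case False
    then have "m = s" using sm by simp
    then show ?thesis by (simp add: H_def)
  next
    case True
    have cl: "closed ({s..t} \<inter> H -` {..0})"
      by (rule continuous_closed_preimage[OF contH]) auto
    have sub: "{s..<m} \<subseteq> {s..t} \<inter> H -` {..0}" using below mt by auto
    have "m \<in> closure {s..<m}" using True by simp
    then have "m \<in> {s..t} \<inter> H -` {..0}" using closure_minimal[OF sub cl] by blast
    then show ?thesis by simp
  qed
  have inS: "H q \<le> 0" if "s \<le> q" "q \<le> m" for q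
    using below Hm that by (cases "q = m") auto
  have "m = t"
  proof (rule ccontr)
    assume "m \<noteq> t"
    then have mt': "m < t" using mt by simp
    have "\<forall>\<^sub>F h in at_right 0. (G (m + h) - G m) / h < 0 + e/2"
      using d[OF sm mt'] unfolding dini_le_def by (drule_tac spec[of _ "e/2"]) (simp add: e)
    then obtain b where b: "b > 0" and bh: "\<And>h. h > 0 \<Longrightarrow> h < b \<Longrightarrow> (G (m + h) - G m) / h < e/2"
      unfolding eventually_at_right_field by auto
    define h0 where "h0 = min (b/2) (t - m)"
    have h0: "h0 > 0" "h0 < b" "m + h0 \<le> t" using b mt' by (auto simp: h0_def)
    have "m + h0 \<in> S"
      unfolding S_def
    proof (intro CollectI conjI ballI)
      show "m + h0 \<in> {s..t}" using h0 sm by auto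
      fix q assume q: "q \<in> {s..m + h0}"
      show "H q \<le> 0"
      proof (cases "q \<le> m")
        case True then show ?thesis using inS q by auto
      next
        case False
        define h where "h = q - m"
        have hp: "h > 0" "h < b" using False q h0 by (auto simp: h_def)
        have "(G (m + h) - G m) / h < e/2" using bh hp by auto
        then have "G (m + h) - G m < e/2 * h" using hp by (simp add: divide_less_eq)
        moreover have "H q = H m + (G (m + h) - G m) - e * h" by (simp add: H_def h_def algebra_simps)
        moreover have "e * h > 0" using hp e by simp
        ultimately show ?thesis using Hm by linarith
      qed
    qed
    then have "m + h0 \<le> m" unfolding m_def using bdd by (rule cSup_upper)
    then show False using h0 by simp
  qed
  then have "H t \<le> 0" using Hm by simp
  then have "G t \<le> G s + e * (t - s)" by (simp add: H_def)
  moreover have "e * (t - s) \<le> e0"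
    using st e0 by (simp add: e_def field_simps)
  ultimately show "G t \<le> G s + e0" by simp
qed

lemma dini_linear:
  fixes F :: "real \<Rightarrow> real"
  assumes st: "s \<le> t" and cont: "continuous_on {s..t} F"
    and d: "\<And>r. s \<le> r \<Longrightarrow> r < t \<Longrightarrow> dini_le F r K"
  shows "F t \<le> F s + K * (t - s)"
proof -
  define G where "G r = F r - K * r" for r
  have "G t \<le> G s"
  proof (rule dini_le_0_mono[OF st])
    show "continuous_on {s..t} G" unfolding G_def by (intro continuous_intros cont)
    fix r assume r: "s \<le> r" "r < t"
    show "dini_le G r 0" unfolding dini_le_def
    proof (intro allI impI)
      fix e :: real assume e: "e > 0"
      have "\<forall>\<^sub>F h in at_right 0. (F (r + h) - F r) / h < K + e"
        using d[OF r] e unfolding dini_le_def by auto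
      moreover have "\<forall>\<^sub>F h in at_right (0::real). h > 0" by (rule eventually_at_right_less)
      ultimately show "\<forall>\<^sub>F h in at_right 0. (G (r + h) - G r) / h < 0 + e"
      proof eventually_elim
        case (elim h)
        have "(G (r + h) - G r) / h = (F (r + h) - F r) / h - K"
          using elim(2) by (simp add: G_def field_simps)
        then show ?case using elim(1) by simp
      qed
    qed
  qed
  then show ?thesis by (simp add: G_def algebra_simps)
qed

lemma dini_gronwall:
  fixes F :: "real \<Rightarrow> real"
  assumes st: "s \<le> t" and cont: "continuous_on {s..t} F"
    and d: "\<And>r. s \<le> r \<Longrightarrow> r < t \<Longrightarrow> dini_le F r (c * F r)"
  shows "F t \<le> exp (c * (t - s)) * F s"
proof -
  define G where "G r = exp (- c * r) * F r" for r
  have "G t \<le> G s"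
  proof (rule dini_le_0_mono[OF st])
    show "continuous_on {s..t} G" unfolding G_def by (intro continuous_intros cont)
    fix r assume r: "s \<le> r" "r < t"
    show "dini_le G r 0" unfolding dini_le_def
    proof (intro allI impI)
      fix e :: real assume e: "e > 0"
      define E where "E = exp (- c * r)"
      have E: "E > 0" by (simp add: E_def)
      define \<delta> where "\<delta> = e / (2 * E)"
      have \<delta>: "\<delta> > 0" using e E by (simp add: \<delta>_def)
      have "\<forall>\<^sub>F h in at_right 0. (F (r + h) - F r) / h < c * F r + \<delta>"
        using d[OF r] \<delta> unfolding dini_le_def by auto
      moreover have "\<forall>\<^sub>F h in at_right (0::real). h > 0" by (rule eventually_at_right_less)
      moreover
      define Q where "Q h = exp (- c * (r + h)) * (c * F r + \<delta>) + F r * ((exp (- c * (r + h)) - E) / h)" for h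
      have "((\<lambda>x. exp (- c * x)) has_real_derivative (- c * exp (- c * r))) (at r)"
        by (auto intro!: derivative_eq_intros)
      then have "((\<lambda>h. (exp (- c * (r + h)) - exp (- c * r)) / h) \<longlongrightarrow> - c * exp (- c * r)) (at 0)"
        by (rule DERIV_D)
      then have q1: "((\<lambda>h. (exp (- c * (r + h)) - E) / h) \<longlongrightarrow> - c * E) (at_right 0)"
        unfolding E_def by (rule tendsto_mono[OF at_le, rotated]) simp
      have "isCont (\<lambda>h. exp (- c * (r + h))) 0" by (intro continuous_intros)
      then have "((\<lambda>h. exp (- c * (r + h))) \<longlongrightarrow> E) (at 0)"
        unfolding isCont_def E_def by simp
      then have q2: "((\<lambda>h. exp (- c * (r + h))) \<longlongrightarrow> E) (at_right 0)"
        by (rule tendsto_mono[OF at_le, rotated]) simp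
      have Ql: "(Q \<longlongrightarrow> E * (c * F r + \<delta>) + F r * (- c * E)) (at_right 0)"
        unfolding Q_def by (intro tendsto_intros q1 q2)
      have "E * (c * F r + \<delta>) + F r * (- c * E) = e / 2"
        using E by (simp add: \<delta>_def field_simps)
      then have Ql': "(Q \<longlongrightarrow> e / 2) (at_right 0)" using Ql by metis
      have "e / 2 < e" using e by simp
      from order_tendstoD(2)[OF Ql' this] have "\<forall>\<^sub>F h in at_right 0. Q h < e" .
      ultimately show "\<forall>\<^sub>F h in at_right 0. (G (r + h) - G r) / h < 0 + e"
      proof eventually_elim
        case (elim h)
        have "(G (r + h) - G r) / h = exp (- c * (r + h)) * ((F (r + h) - F r) / h) + F r * ((exp (- c * (r + h)) - E) / h)"
          using elim(2) by (simp add: G_def E_def field_simps)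
        also have "\<dots> \<le> Q h" unfolding Q_def
          using elim(1) by (intro add_right_mono mult_left_mono) auto
        finally show ?case using elim(3) by simp
      qed
    qed
  qed
  then have "exp (- c * t) * F t \<le> exp (- c * s) * F s" by (simp add: G_def)
  then have h1: "exp (c * t) * (exp (- c * t) * F t) \<le> exp (c * t) * (exp (- c * s) * F s)"
    by (simp add: mult_left_mono)
  have e1: "exp (c * t) * (exp (- c * t) * F t) = F t" by (simp add: exp_minus)
  have e2: "exp (c * t) * (exp (- c * s) * F s) = exp (c * (t - s)) * F s"
    by (simp add: right_diff_distrib exp_diff exp_minus field_simps)
  show ?thesis using h1 unfolding e1 e2 .
qed

lemma growth_lemma:
  fixes F g :: "real \<Rightarrow> real"
  assumes cont: "continuous_on {0<..} F" and nonneg: "\<And>r. r > 0 \<Longrightarrow> F r \<ge> 0"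
    and lam: "lam > 0"
    and d: "\<And>r. r > 0 \<Longrightarrow> dini_le F r (K - lam * F r - g r)"
    and Flim: "(F \<longlongrightarrow> c) at_top"
    and glow: "\<And>\<delta>. \<delta> > 0 \<Longrightarrow> eventually (\<lambda>r. g r \<ge> g0 - \<delta>) at_top"
  shows "K - lam * c - g0 \<ge> 0"
proof (rule ccontr)
  assume "\<not> K - lam * c - g0 \<ge> 0"
  define gap where "gap = lam * c + g0 - K"
  have gap: "gap > 0" using \<open>\<not> K - lam * c - g0 \<ge> 0\<close> by (simp add: gap_def)
  have "c - gap / (4 * lam) < c" using gap lam by simp
  from order_tendstoD(1)[OF Flim this]
  have ev1: "\<forall>\<^sub>F r in at_top. c - gap / (4 * lam) < F r" .
  have ev2: "\<forall>\<^sub>F r in at_top. g r \<ge> g0 - gap / 4" using glow gap by simp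
  from eventually_conj[OF ev1 ev2] obtain R where
    R: "\<And>r. r \<ge> R \<Longrightarrow> c - gap / (4 * lam) < F r \<and> g r \<ge> g0 - gap / 4"
    unfolding eventually_at_top_linorder by auto
  define R' where "R' = max R 1"
  have R'pos: "R' > 0" by (simp add: R'_def)
  have bnd: "K - lam * F r - g r \<le> - gap / 2" if "r \<ge> R'" for r
  proof -
    have "c - gap / (4 * lam) < F r" "g r \<ge> g0 - gap / 4" using R[of r] that by (auto simp: R'_def)
    then have "lam * (c - gap / (4 * lam)) \<le> lam * F r" using lam by simp
    then have "lam * c - gap / 4 \<le> lam * F r" using lam by (simp add: right_diff_distrib)
    then show ?thesis using \<open>g r \<ge> g0 - gap / 4\<close> gap_def by linarith
  qed
  define t where "t = R' + 2 * (F R' + 1) / gap"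
  have FR': "F R' \<ge> 0" using nonneg R'pos by simp
  have tR: "R' \<le> t" using FR' gap by (simp add: t_def)
  have "F t \<le> F R' + (- gap / 2) * (t - R')"
  proof (rule dini_linear[OF tR])
    show "continuous_on {R'..t} F" using cont by (rule continuous_on_subset) (use R'pos in auto)
    fix r assume "R' \<le> r" "r < t"
    then show "dini_le F r (- gap / 2)" using d[of r] bnd[of r] R'pos by (auto intro: dini_le_mono)
  qed
  also have "\<dots> = -1" using gap by (simp add: t_def field_simps)
  finally have "F t < 0" by simp
  moreover have "F t \<ge> 0" using nonneg R'pos tR by simp
  ultimately show False by simp
qed

lemma evi_dini:
  fixes f :: "real \<Rightarrow> real"
  assumes "ereal (1/2) * upper_dini f t + ereal a + ereal P \<le> ereal Q"
  shows "dini_le f t (2 * (Q - P - a))"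
  unfolding dini_le_def
proof (intro allI impI)
  fix e :: real assume e: "e > 0"
  have "upper_dini f t < ereal (2 * (Q - P - a) + e)"
  proof (cases "upper_dini f t")
    case (real d)
    then show ?thesis using assms e by simp
  next
    case PInf
    then show ?thesis using assms by simp
  next
    case MInf
    then show ?thesis by simp
  qed
  then have "\<forall>\<^sub>F h in at_right 0. ereal ((f (t + h) - f t) / h) < ereal (2 * (Q - P - a) + e)"
    unfolding upper_dini_def by (rule Limsup_lessD)
  then show "\<forall>\<^sub>F h in at_right 0. (f (t + h) - f t) / h < 2 * (Q - P - a) + e"
    by simp
qed

lemma lsc_event:
  fixes f :: "'a::topological_space \<Rightarrow> ereal"
  assumes "lsc f" "f x0 = ereal c0" "(X \<longlongrightarrow> x0) F" "\<delta> > 0"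
  shows "eventually (\<lambda>r. ereal (c0 - \<delta>) < f (X r)) F"
proof -
  have "ereal (c0 - \<delta>) < Liminf (at x0) f"
  proof -
    have "ereal (c0 - \<delta>) < f x0" using assms(2,4) by simp
    also have "f x0 \<le> Liminf (at x0) f" using assms(1) unfolding lsc_def by blast
    finally show ?thesis .
  qed
  then have "eventually (\<lambda>z. ereal (c0 - \<delta>) < f z) (at x0)" by (rule less_LiminfD)
  then have "eventually (\<lambda>z. ereal (c0 - \<delta>) < f z) (nhds x0)"
    unfolding eventually_at_filter using assms(2,4) by (auto elim!: eventually_mono)
  then show ?thesis using assms(3) unfolding filterlim_iff by blast
qed

lemma usc_event:
  fixes f :: "'a::topological_space \<Rightarrow> ereal"
  assumes "usc f" "f x0 = ereal c0" "(X \<longlongrightarrow> x0) F" "\<delta> > 0"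
  shows "eventually (\<lambda>r. f (X r) < ereal (c0 + \<delta>)) F"
proof -
  have "Limsup (at x0) f < ereal (c0 + \<delta>)"
  proof -
    have "Limsup (at x0) f \<le> f x0" using assms(1) unfolding usc_def by blast
    also have "f x0 < ereal (c0 + \<delta>)" using assms(2,4) by simp
    finally show ?thesis .
  qed
  then have "eventually (\<lambda>z. f z < ereal (c0 + \<delta>)) (at x0)" by (rule Limsup_lessD)
  then have "eventually (\<lambda>z. f z < ereal (c0 + \<delta>)) (nhds x0)"
    unfolding eventually_at_filter using assms(2,4) by (auto elim!: eventually_mono)
  then show ?thesis using assms(3) unfolding filterlim_iff by blast
qed

lemma exp_neg_lim:
  fixes lam :: real
  assumes "lam > 0"
  shows "((\<lambda>t. exp (- lam * (t - 1))) \<longlongrightarrow> 0) at_top"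
proof -
  have "filterlim (\<lambda>t::real. -1 + t) at_top at_top"
    by (rule filterlim_tendsto_add_at_top[OF tendsto_const filterlim_ident])
  then have "filterlim (\<lambda>t::real. lam * (-1 + t)) at_top at_top"
    using assms by (intro filterlim_tendsto_pos_mult_at_top[OF tendsto_const]) auto
  then have "filterlim (\<lambda>t::real. - (lam * (-1 + t))) at_bot at_top"
    by (simp add: filterlim_uminus_at_top)
  from filterlim_compose[OF exp_at_bot this]
  show ?thesis by (simp add: algebra_simps)
qed

theorem mainTheorem6:
  fixes lam :: real
    and \<phi> :: "'a::complete_space \<Rightarrow> 'b::complete_space \<Rightarrow> ereal"
    and u :: "real \<Rightarrow> 'a" and v :: "real \<Rightarrow> 'b"
    and w0 :: "'a \<times> 'b" and xs :: 'a and ys :: 'b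
  assumes "proper_saddle \<phi>" and "closed_saddle \<phi>"
    and "assumption_A1 \<phi>" and "assumption_A3i \<phi>"
    and "EVIs_solution lam \<phi> u v"
    and "((\<lambda>t. (u t, v t)) \<longlongrightarrow> w0) (at_right 0)"
    and "w0 \<in> closure (Dphi \<phi>)"
    and "saddle_point \<phi> xs ys"
  shows "\<forall>t>0. (dist (u t, v t) (xs, ys))\<^sup>2 \<le> exp (- 2 * lam * t) * (dist w0 (xs, ys))\<^sup>2"
proof -
  note sol = assms(5)[unfolded EVIs_solution_def]
  have cu: "continuous_on {0<..} u" and cv: "continuous_on {0<..} v" using sol by auto
  have uDX: "u t \<in> DX \<phi>" and vDY: "v t \<in> DY \<phi>" if "t > 0" for t
    using sol that by (auto simp: Dphi_def)
  have evi: "\<And>t x y. t > 0 \<Longrightarrow> x \<in> DX \<phi> \<Longrightarrow> y \<in> DY \<phi> \<Longrightarrow>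
      ereal (1/2) * upper_dini (\<lambda>s. (dist (u s) x)\<^sup>2) t
          + ereal (lam/2 * (dist (u t) x)\<^sup>2) + \<phi> (u t) (v t) \<le> \<phi> x (v t) \<and>
        ereal (1/2) * upper_dini (\<lambda>s. (dist (v s) y)\<^sup>2) t
          + ereal (lam/2 * (dist (v t) y)\<^sup>2) + \<phi> (u t) y \<le> \<phi> (u t) (v t)"
    using sol by (auto simp: Dphi_def)
  have sp: "\<And>x y. \<phi> xs y \<le> \<phi> xs ys \<and> \<phi> xs ys \<le> \<phi> x ys"
    using assms(8) unfolding saddle_point_def by blast
  obtain x0 y0 where x0: "x0 \<in> DX \<phi>" and y0: "y0 \<in> DY \<phi>"
    using assms(1) unfolding proper_saddle_def Dphi_def by auto
  have A1a: "\<And>x y. x \<notin> DX \<phi> \<Longrightarrow> y \<in> DY \<phi> \<Longrightarrow> \<phi> x y = \<infinity>"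
   and A1b: "\<And>x y. x \<in> DX \<phi> \<Longrightarrow> y \<notin> DY \<phi> \<Longrightarrow> \<phi> x y = -\<infinity>"
    using assms(3) unfolding assumption_A1_def by auto
  have xsD: "xs \<in> DX \<phi>"
  proof (rule ccontr)
    assume "xs \<notin> DX \<phi>"
    then have "\<phi> xs y0 = \<infinity>" using A1a y0 by blast
    then have "\<infinity> \<le> \<phi> xs ys" using sp[where y=y0] by metis
    then have "\<phi> xs ys = \<infinity>" by simp
    then have "\<infinity> \<le> \<phi> x0 ys" using sp[where x=x0] by metis
    then have "\<phi> x0 ys = \<infinity>" by simp
    then show False using x0 unfolding DX_def by auto
  qed
  have ysD: "ys \<in> DY \<phi>"
  proof (rule ccontr)
    assume "ys \<notin> DY \<phi>"
    then have "\<phi> x0 ys = -\<infinity>" using A1b x0 by blast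
    then have "\<phi> xs ys \<le> -\<infinity>" using sp[where x=x0] by metis
    then have "\<phi> xs ys = -\<infinity>" by simp
    then have "\<phi> xs y0 \<le> -\<infinity>" using sp[where y=y0] by metis
    then have "\<phi> xs y0 = -\<infinity>" by simp
    then show False using y0 unfolding DY_def by auto
  qed
  define \<Phi> where "\<Phi> x y = real_of_ereal (\<phi> x y)" for x y
  have fin: "\<phi> x y = ereal (\<Phi> x y)" if "x \<in> DX \<phi>" "y \<in> DY \<phi>" for x y
  proof -
    have "\<phi> x y < \<infinity>" "\<phi> x y > -\<infinity>" using that unfolding DX_def DY_def by auto
    then show ?thesis unfolding \<Phi>_def by (cases "\<phi> x y") auto
  qed
  define ps where "ps = \<Phi> xs ys"
  have spY: "\<Phi> xs y \<le> ps" if "y \<in> DY \<phi>" for y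
    using sp[where y=y] fin[OF xsD that] fin[OF xsD ysD] by (simp add: ps_def)
  have spX: "ps \<le> \<Phi> x ys" if "x \<in> DX \<phi>" for x
    using sp[where x=x] fin[OF that ysD] fin[OF xsD ysD] by (simp add: ps_def)
  have dx: "dini_le (\<lambda>s. (dist (u s) x)\<^sup>2) t
      (2 * (\<Phi> x (v t) - \<Phi> (u t) (v t) - lam/2 * (dist (u t) x)\<^sup>2))"
    if "t > 0" "x \<in> DX \<phi>" for t x
    apply (rule evi_dini)
    using evi[OF that ysD] fin[OF uDX[OF that(1)] vDY[OF that(1)]] fin[OF that(2) vDY[OF that(1)]]
    by (simp add: add.assoc)
  have dy: "dini_le (\<lambda>s. (dist (v s) y)\<^sup>2) t
      (2 * (\<Phi> (u t) (v t) - \<Phi> (u t) y - lam/2 * (dist (v t) y)\<^sup>2))"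
    if "t > 0" "y \<in> DY \<phi>" for t y
    apply (rule evi_dini)
    using evi[OF that(1) xsD that(2)] fin[OF uDX[OF that(1)] vDY[OF that(1)]] fin[OF uDX[OF that(1)] that(2)]
    by (simp add: add.assoc)
  define F where "F t = (dist (u t) xs)\<^sup>2 + (dist (v t) ys)\<^sup>2" for t
  have contd: "continuous_on {0<..} (\<lambda>t. (dist (u t) x)\<^sup>2 + (dist (v t) y)\<^sup>2)" for x y
    by (intro continuous_intros cu cv)
  have contF: "continuous_on {0<..} F" unfolding F_def by (rule contd)
  have Fnn: "F t \<ge> 0" for t unfolding F_def by simp
  have dF1: "dini_le F t (- lam * F t)" if "t > 0" for t
  proof -
    have "dini_le F t (2 * (\<Phi> xs (v t) - \<Phi> (u t) (v t) - lam/2 * (dist (u t) xs)\<^sup>2)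
        + 2 * (\<Phi> (u t) (v t) - \<Phi> (u t) ys - lam/2 * (dist (v t) ys)\<^sup>2))"
      unfolding F_def by (intro dini_le_add dx dy that xsD ysD)
    moreover have "\<Phi> xs (v t) \<le> \<Phi> (u t) ys" using spY[OF vDY[OF that]] spX[OF uDX[OF that]] by simp
    ultimately show ?thesis by (elim dini_le_mono) (simp add: F_def algebra_simps)
  qed
  have conv: "(u \<longlongrightarrow> xs) at_top \<and> (v \<longlongrightarrow> ys) at_top" if lam: "lam > 0"
  proof -
    have gr: "F t \<le> exp (- lam * (t - 1)) * F 1" if "1 \<le> t" for t
    proof (rule dini_gronwall[OF that])
      show "continuous_on {1..t} F" using contF by (rule continuous_on_subset) auto
      fix r assume "1 \<le> r" "r < t"
      then show "dini_le F r (- lam * F r)" using dF1[of r] by simp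
    qed
    have l0: "((\<lambda>t. exp (- lam * (t - 1)) * F 1) \<longlongrightarrow> 0) at_top"
      using tendsto_mult[OF exp_neg_lim[OF lam] tendsto_const[of "F 1"]] by simp
    have F0: "(F \<longlongrightarrow> 0) at_top"
    proof (rule tendsto_sandwich[OF _ _ tendsto_const l0])
      show "\<forall>\<^sub>F t in at_top. 0 \<le> F t" using Fnn by simp
      show "\<forall>\<^sub>F t in at_top. F t \<le> exp (- lam * (t - 1)) * F 1"
        using eventually_ge_at_top[of 1] by eventually_elim (rule gr)
    qed
    then have sF: "((\<lambda>t. sqrt (F t)) \<longlongrightarrow> 0) at_top"
      using tendsto_real_sqrt[OF F0] by simp
    have "((\<lambda>t. dist (u t) xs) \<longlongrightarrow> 0) at_top"
    proof (rule tendsto_sandwich[OF _ _ tendsto_const sF])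
      show "\<forall>\<^sub>F t in at_top. 0 \<le> dist (u t) xs" by simp
      show "\<forall>\<^sub>F t in at_top. dist (u t) xs \<le> sqrt (F t)"
        by (intro always_eventually allI real_le_rsqrt) (simp add: F_def)
    qed
    moreover have "((\<lambda>t. dist (v t) ys) \<longlongrightarrow> 0) at_top"
    proof (rule tendsto_sandwich[OF _ _ tendsto_const sF])
      show "\<forall>\<^sub>F t in at_top. 0 \<le> dist (v t) ys" by simp
      show "\<forall>\<^sub>F t in at_top. dist (v t) ys \<le> sqrt (F t)"
        by (intro always_eventually allI real_le_rsqrt) (simp add: F_def)
    qed
    ultimately show ?thesis using tendsto_dist_iff[of u xs at_top] tendsto_dist_iff[of v ys at_top] by blast
  qed
  have lscY: "lsc (\<lambda>x. \<phi> x y)" if "y \<in> DY \<phi>" for y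
    using assms(2) that unfolding closed_saddle_def by blast
  have uscX: "usc (\<lambda>y. \<phi> x y)" if "x \<in> DX \<phi>" for x
    using assms(2) that unfolding closed_saddle_def by blast
  have GX: "\<Phi> xs y \<le> ps - lam/2 * (dist y ys)\<^sup>2" if y: "y \<in> DY \<phi>" for y
  proof (cases "lam > 0")
    case False
    then have "lam * (dist y ys)\<^sup>2 \<le> 0" by (simp add: mult_nonpos_nonneg)
    then have "0 \<le> - lam/2 * (dist y ys)\<^sup>2" by simp
    then show ?thesis using spY[OF y] by simp
  next
    case lam: True
    have "2 * ps - lam * (dist ys y)\<^sup>2 - 2 * \<Phi> xs y \<ge> 0"
    proof (rule growth_lemma[where F = "\<lambda>t. (dist (u t) xs)\<^sup>2 + (dist (v t) y)\<^sup>2"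
          and g = "\<lambda>t. 2 * \<Phi> (u t) y"])
      show "continuous_on {0<..} (\<lambda>t. (dist (u t) xs)\<^sup>2 + (dist (v t) y)\<^sup>2)" by (rule contd)
      show "0 \<le> (dist (u r) xs)\<^sup>2 + (dist (v r) y)\<^sup>2" for r by simp
      show "lam > 0" by (rule lam)
      fix r :: real assume r: "r > 0"
      have "dini_le (\<lambda>t. (dist (u t) xs)\<^sup>2 + (dist (v t) y)\<^sup>2) r
          (2 * (\<Phi> xs (v r) - \<Phi> (u r) (v r) - lam/2 * (dist (u r) xs)\<^sup>2)
          + 2 * (\<Phi> (u r) (v r) - \<Phi> (u r) y - lam/2 * (dist (v r) y)\<^sup>2))"
        by (intro dini_le_add dx dy r xsD y)
      moreover have "\<Phi> xs (v r) \<le> ps" using spY[OF vDY[OF r]] .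
      ultimately show "dini_le (\<lambda>t. (dist (u t) xs)\<^sup>2 + (dist (v t) y)\<^sup>2) r
          (2 * ps - lam * ((dist (u r) xs)\<^sup>2 + (dist (v r) y)\<^sup>2) - 2 * \<Phi> (u r) y)"
        by (elim dini_le_mono) (simp add: algebra_simps)
    next
      have "((\<lambda>t. (dist (u t) xs)\<^sup>2 + (dist (v t) y)\<^sup>2) \<longlongrightarrow> (dist xs xs)\<^sup>2 + (dist ys y)\<^sup>2) at_top"
        using conv[OF lam] by (intro tendsto_intros) auto
      then show "((\<lambda>t. (dist (u t) xs)\<^sup>2 + (dist (v t) y)\<^sup>2) \<longlongrightarrow> (dist ys y)\<^sup>2) at_top" by simp
    next
      fix \<delta> :: real assume \<delta>: "\<delta> > 0"
      have "eventually (\<lambda>r. ereal (\<Phi> xs y - \<delta>/2) < \<phi> (u r) y) at_top"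
        using lsc_event[OF lscY[OF y] fin[OF xsD y] conjunct1[OF conv[OF lam]]] \<delta> by simp
      then show "\<forall>\<^sub>F r in at_top. 2 * \<Phi> xs y - \<delta> \<le> 2 * \<Phi> (u r) y"
        using eventually_gt_at_top[of 0]
      proof eventually_elim
        case (elim r)
        then show ?case using fin[OF uDX[OF elim(2)] y] by simp
      qed
    qed
    then show ?thesis by (simp add: dist_commute)
  qed
  have GY: "\<Phi> x ys \<ge> ps + lam/2 * (dist x xs)\<^sup>2" if x: "x \<in> DX \<phi>" for x
  proof (cases "lam > 0")
    case False
    then have "lam/2 * (dist x xs)\<^sup>2 \<le> 0" by (simp add: mult_nonpos_nonneg)
    then show ?thesis using spX[OF x] by simp
  next
    case lam: True
    have "- 2 * ps - lam * (dist xs x)\<^sup>2 - (- 2 * \<Phi> x ys) \<ge> 0"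
    proof (rule growth_lemma[where F = "\<lambda>t. (dist (u t) x)\<^sup>2 + (dist (v t) ys)\<^sup>2"
          and g = "\<lambda>t. - 2 * \<Phi> x (v t)"])
      show "continuous_on {0<..} (\<lambda>t. (dist (u t) x)\<^sup>2 + (dist (v t) ys)\<^sup>2)" by (rule contd)
      show "0 \<le> (dist (u r) x)\<^sup>2 + (dist (v r) ys)\<^sup>2" for r by simp
      show "lam > 0" by (rule lam)
      fix r :: real assume r: "r > 0"
      have "dini_le (\<lambda>t. (dist (u t) x)\<^sup>2 + (dist (v t) ys)\<^sup>2) r
          (2 * (\<Phi> x (v r) - \<Phi> (u r) (v r) - lam/2 * (dist (u r) x)\<^sup>2)
          + 2 * (\<Phi> (u r) (v r) - \<Phi> (u r) ys - lam/2 * (dist (v r) ys)\<^sup>2))"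
        by (intro dini_le_add dx dy r x ysD)
      moreover have "ps \<le> \<Phi> (u r) ys" using spX[OF uDX[OF r]] .
      ultimately show "dini_le (\<lambda>t. (dist (u t) x)\<^sup>2 + (dist (v t) ys)\<^sup>2) r
          (- 2 * ps - lam * ((dist (u r) x)\<^sup>2 + (dist (v r) ys)\<^sup>2) - (- 2 * \<Phi> x (v r)))"
        by (elim dini_le_mono) (simp add: algebra_simps)
    next
      have "((\<lambda>t. (dist (u t) x)\<^sup>2 + (dist (v t) ys)\<^sup>2) \<longlongrightarrow> (dist xs x)\<^sup>2 + (dist ys ys)\<^sup>2) at_top"
        using conv[OF lam] by (intro tendsto_intros) auto
      then show "((\<lambda>t. (dist (u t) x)\<^sup>2 + (dist (v t) ys)\<^sup>2) \<longlongrightarrow> (dist xs x)\<^sup>2) at_top" by simp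
    next
      fix \<delta> :: real assume \<delta>: "\<delta> > 0"
      have "eventually (\<lambda>r. \<phi> x (v r) < ereal (\<Phi> x ys + \<delta>/2)) at_top"
        using usc_event[OF uscX[OF x] fin[OF x ysD] conjunct2[OF conv[OF lam]]] \<delta> by simp
      then show "\<forall>\<^sub>F r in at_top. - 2 * \<Phi> x ys - \<delta> \<le> - 2 * \<Phi> x (v r)"
        using eventually_gt_at_top[of 0]
      proof eventually_elim
        case (elim r)
        then show ?case using fin[OF x vDY[OF elim(2)]] by simp
      qed
    qed
    then show ?thesis by (simp add: dist_commute)
  qed
  have dF2: "dini_le F t (- 2 * lam * F t)" if "t > 0" for t
  proof -
    have "dini_le F t (2 * (\<Phi> xs (v t) - \<Phi> (u t) (v t) - lam/2 * (dist (u t) xs)\<^sup>2)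
        + 2 * (\<Phi> (u t) (v t) - \<Phi> (u t) ys - lam/2 * (dist (v t) ys)\<^sup>2))"
      unfolding F_def by (intro dini_le_add dx dy that xsD ysD)
    moreover have "\<Phi> xs (v t) \<le> ps - lam/2 * (dist (v t) ys)\<^sup>2" using GX[OF vDY[OF that]] .
    moreover have "\<Phi> (u t) ys \<ge> ps + lam/2 * (dist (u t) xs)\<^sup>2" using GY[OF uDX[OF that]] .
    ultimately show ?thesis by (elim dini_le_mono) (simp add: F_def algebra_simps dist_commute)
  qed
  have gron: "F t \<le> exp (- 2 * lam * (t - s)) * F s" if "0 < s" "s \<le> t" for s t
  proof (rule dini_gronwall[OF that(2)])
    show "continuous_on {s..t} F" using contF by (rule continuous_on_subset) (use that in auto)
    fix r assume "s \<le> r" "r < t"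
    then show "dini_le F r (- 2 * lam * F r)" using dF2[of r] that by simp
  qed
  have Fdist: "F t = (dist (u t, v t) (xs, ys))\<^sup>2" for t
    unfolding F_def dist_Pair_Pair by simp
  have Flim0: "(F \<longlongrightarrow> (dist w0 (xs, ys))\<^sup>2) (at_right 0)"
    unfolding Fdist by (intro tendsto_intros assms(6))
  show ?thesis
  proof (intro allI impI)
    fix t :: real assume t: "t > 0"
    have lim: "((\<lambda>s. exp (- 2 * lam * (t - s)) * F s) \<longlongrightarrow> exp (- 2 * lam * (t - 0)) * (dist w0 (xs, ys))\<^sup>2) (at_right 0)"
      by (intro tendsto_intros Flim0)
    have ev: "\<forall>\<^sub>F s in at_right 0. F t \<le> exp (- 2 * lam * (t - s)) * F s"
      using eventually_at_right_real[OF t] by eventually_elim (rule gron, auto)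
    have "F t \<le> exp (- 2 * lam * (t - 0)) * (dist w0 (xs, ys))\<^sup>2"
      by (rule tendsto_lowerbound[OF lim ev]) simp
    then show "(dist (u t, v t) (xs, ys))\<^sup>2 \<le> exp (- 2 * lam * t) * (dist w0 (xs, ys))\<^sup>2"
      unfolding Fdist by simp
  qed
qed

end
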